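(* Let $K$ be a number field, let $\alpha>1$ be real, and let $F\in K[[x^{\mathbb{R}}]]$ be a Hahn series satisfying $\sum_{i=0}^d P_i(x)F(x^{\alpha^i})=0$ for some polynomials $P_0,\dots,P_d\in K[x]$ with $P_d\ne0$. Then only finitely many of the sets $T(s)=\alpha^{\mathbb{Z}}s+\mathbb{Z}[\alpha,\alpha^{-1}]$ ($s\in\mathbb{R}$) have nonempty intersection with $P(F)$; in other words, the set $\widehat{P(F)}$ of equivalence classes of the relation $\sim$ meeting $P(F)$ is finite.
   Context: $K[[x^{\mathbb{R}}]]$ is the field of Hahn series $\sum_{i\in\mathbb{R}} f_ix^i$ ($f_i\in K$) with well-ordered support $P(F)=\{i:f_i\ne0\}$; $F(x^\gamma)=\sum_if_ix^{\gamma i}$. $\mathbb{Z}[\alpha,\alpha^{-1}]$ is the subring of $\mathbb{R}$ generated by $\alpha^{\pm1}$. The relation $x\sim y$ on $\mathbb{R}$ holds iff $\alpha^mx+r=y$ for some $m\in\mathbb{Z}$, $r\in\mathbb{Z}[\alpha,\alpha^{-1}]$; its equivalence classes are exactly the sets $T(s)=\{\alpha^ms+r:m\in\mathbb{Z}, r\in\mathbb{Z}[\alpha,\alpha^{-1}]\}$. *)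

theory Defs
  imports Complex_Main "HOL-Computational_Algebra.Polynomial"
begin

definition number_field :: "complex set \<Rightarrow> bool" where
  "number_field K \<longleftrightarrow>
     0 \<in> K \<and> 1 \<in> K \<and>
     (\<forall>a\<in>K. \<forall>b\<in>K. a + b \<in> K \<and> a - b \<in> K \<and> a * b \<in> K) \<and>
     (\<forall>a\<in>K. a \<noteq> 0 \<longrightarrow> inverse a \<in> K) \<and>
     (\<exists>B. finite B \<and> B \<subseteq> K \<and>
        (\<forall>a\<in>K. \<exists>c. (\<forall>b\<in>B. c b \<in> \<rat>) \<and> a = (\<Sum>b\<in>B. c b * b)))"

definition hsupp :: "(real \<Rightarrow> complex) \<Rightarrow> real set" where
  "hsupp F = {i. F i \<noteq> 0}"

definition hahn_series :: "complex set \<Rightarrow> (real \<Rightarrow> complex) \<Rightarrow> bool" where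
  "hahn_series K F \<longleftrightarrow> (\<forall>i. F i \<in> K) \<and>
     (\<forall>S. S \<subseteq> hsupp F \<and> S \<noteq> {} \<longrightarrow> (\<exists>m\<in>S. \<forall>s\<in>S. m \<le> s))"

text \<open>Coefficient of x^t in  P(x) * F(x^gamma), where F(x^gamma) = sum_i f_i x^(gamma i).\<close>
definition poly_subst_coeff ::
  "complex poly \<Rightarrow> real \<Rightarrow> (real \<Rightarrow> complex) \<Rightarrow> real \<Rightarrow> complex" where
  "poly_subst_coeff P \<gamma> F t = (\<Sum>k\<le>degree P. coeff P k * F ((t - real k) / \<gamma>))"

inductive_set Zalpha :: "real \<Rightarrow> real set" for \<alpha> :: real where
  one: "1 \<in> Zalpha \<alpha>"
| gen: "\<alpha> \<in> Zalpha \<alpha>"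
| geninv: "inverse \<alpha> \<in> Zalpha \<alpha>"
| add: "x \<in> Zalpha \<alpha> \<Longrightarrow> y \<in> Zalpha \<alpha> \<Longrightarrow> x + y \<in> Zalpha \<alpha>"
| neg: "x \<in> Zalpha \<alpha> \<Longrightarrow> - x \<in> Zalpha \<alpha>"
| mult: "x \<in> Zalpha \<alpha> \<Longrightarrow> y \<in> Zalpha \<alpha> \<Longrightarrow> x * y \<in> Zalpha \<alpha>"

definition Tcls :: "real \<Rightarrow> real \<Rightarrow> real set" where
  "Tcls \<alpha> s = {\<alpha> powi m * s + r | m r. r \<in> Zalpha \<alpha>}"

end

theory Submission
  imports Defs
begin

lemma Zalpha_int: "of_int n \<in> Zalpha a"
proof -
  have nat: "of_nat m + 1 \<in> Zalpha a" for m
  proof (induction m)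
    case 0 then show ?case using Zalpha.one by simp
  next
    case (Suc m) then show ?case using Zalpha.add[OF Suc Zalpha.one] by (simp add: add.commute)
  qed
  have z: "0 \<in> Zalpha a"
    using Zalpha.add[OF Zalpha.one Zalpha.neg[OF Zalpha.one]] by simp
  have n: "of_nat m \<in> Zalpha a" for m
    using nat[of "m - 1"] z by (cases m) (auto simp: add.commute)
  show ?thesis
  proof (cases "n \<ge> 0")
    case True then show ?thesis using n[of "nat n"] by simp
  next
    case False then show ?thesis using Zalpha.neg[OF n[of "nat (-n)"]] by simp
  qed
qed

lemma Zalpha_pow: "a ^ n \<in> Zalpha a"
  by (induction n) (auto intro: Zalpha.intros)

lemma Zalpha_powinv: "inverse a ^ n \<in> Zalpha a"
  by (induction n) (auto intro: Zalpha.intros)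

lemma Zalpha_powi: "a powi j \<in> Zalpha a"
  by (cases "j \<ge> 0") (auto simp: power_int_def Zalpha_pow Zalpha_powinv)

lemma Zalpha_diff: "x \<in> Zalpha a \<Longrightarrow> y \<in> Zalpha a \<Longrightarrow> x - y \<in> Zalpha a"
  using Zalpha.add[OF _ Zalpha.neg] by (metis diff_conv_add_uminus)

lemma Tcls_same:
  assumes a: "a \<noteq> 0" and v: "v \<in> Tcls a s"
  shows "Tcls a v = Tcls a s"
proof -
  from v obtain m r where vm: "v = a powi m * s + r" "r \<in> Zalpha a"
    unfolding Tcls_def by blast
  show ?thesis
  proof
    show "Tcls a v \<subseteq> Tcls a s"
    proof
      fix x assume "x \<in> Tcls a v"
      then obtain n r' where x: "x = a powi n * v + r'" "r' \<in> Zalpha a"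
        unfolding Tcls_def by blast
      have "x = a powi (n + m) * s + (a powi n * r + r')"
        using x vm a by (simp add: power_int_add algebra_simps)
      moreover have "a powi n * r + r' \<in> Zalpha a"
        by (intro Zalpha.add Zalpha.mult Zalpha_powi vm x)
      ultimately show "x \<in> Tcls a s" unfolding Tcls_def by blast
    qed
  next
    show "Tcls a s \<subseteq> Tcls a v"
    proof
      fix x assume "x \<in> Tcls a s"
      then obtain n r' where x: "x = a powi n * s + r'" "r' \<in> Zalpha a"
        unfolding Tcls_def by blast
      have "a powi n = a powi (n - m) * a powi m"
        using a by (simp add: power_int_add[symmetric])
      then have "x = a powi (n - m) * v + (r' - a powi (n - m) * r)"
        using x vm a by (simp add: algebra_simps)
      moreover have "r' - a powi (n - m) * r \<in> Zalpha a"
        by (intro Zalpha_diff Zalpha.mult Zalpha_powi vm x)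
      ultimately show "x \<in> Tcls a v" unfolding Tcls_def by blast
    qed
  qed
qed

definition ordp :: "complex poly \<Rightarrow> nat" where
  "ordp p = (LEAST k. coeff p k \<noteq> 0)"

lemma ordp_nz: "p \<noteq> 0 \<Longrightarrow> coeff p (ordp p) \<noteq> 0"
  unfolding ordp_def by (rule LeastI_ex) (meson leading_coeff_neq_0)

lemma ordp_le: "coeff p k \<noteq> 0 \<Longrightarrow> ordp p \<le> k"
  unfolding ordp_def by (rule Least_le)

lemma ordp_deg: "p \<noteq> 0 \<Longrightarrow> ordp p \<le> degree p"
  by (intro ordp_le) simp

theorem mainTheorem8:
  fixes K :: "complex set" and \<alpha> :: real and F :: "real \<Rightarrow> complex"
    and P :: "nat \<Rightarrow> complex poly" and d :: nat
  assumes "number_field K"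
    and "\<alpha> > 1"
    and "hahn_series K F"
    and "\<forall>i\<le>d. \<forall>k. coeff (P i) k \<in> K"
    and "P d \<noteq> 0"
    and "\<forall>t. (\<Sum>i\<le>d. poly_subst_coeff (P i) (\<alpha> ^ i) F t) = 0"
  shows "finite {Tcls \<alpha> s | s. Tcls \<alpha> s \<inter> hsupp F \<noteq> {}}"
proof -
  have a0: "\<alpha> \<noteq> 0" "\<alpha> > 0" using assms(2) by auto
  define V where "V = {v. \<exists>i\<le>d. \<exists>j\<le>d. i \<noteq> j \<and> P i \<noteq> 0 \<and> P j \<noteq> 0 \<and>
      real (ordp (P i)) + \<alpha> ^ i * v = real (ordp (P j)) + \<alpha> ^ j * v}"
  have finV: "finite V"
  proof -
    have "V \<subseteq> (\<lambda>(i,j). (real (ordp (P j)) - real (ordp (P i))) / (\<alpha> ^ i - \<alpha> ^ j)) ` ({..d} \<times> {..d})"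
    proof
      fix v assume "v \<in> V"
      then obtain i j where ij: "i \<le> d" "j \<le> d" "i \<noteq> j"
        "real (ordp (P i)) + \<alpha> ^ i * v = real (ordp (P j)) + \<alpha> ^ j * v"
        unfolding V_def by blast
      have "\<alpha> ^ i \<noteq> \<alpha> ^ j" using ij(3) assms(2) by (simp add: power_inject_exp)
      then have "v = (real (ordp (P j)) - real (ordp (P i))) / (\<alpha> ^ i - \<alpha> ^ j)"
        using ij(4) by (simp add: field_simps)
      then show "v \<in> (\<lambda>(i,j). (real (ordp (P j)) - real (ordp (P i))) / (\<alpha> ^ i - \<alpha> ^ j)) ` ({..d} \<times> {..d})"
        using ij by force
    qed
    then show ?thesis by (rule finite_subset) simp
  qed
  have key: "\<exists>v\<in>V. X = Tcls \<alpha> v" if X: "X \<in> {Tcls \<alpha> s | s. Tcls \<alpha> s \<inter> hsupp F \<noteq> {}}" for X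
  proof -
    obtain s where s: "X = Tcls \<alpha> s" "Tcls \<alpha> s \<inter> hsupp F \<noteq> {}" using X by blast
    obtain v where v: "v \<in> Tcls \<alpha> s \<inter> hsupp F" "\<And>u. u \<in> Tcls \<alpha> s \<inter> hsupp F \<Longrightarrow> v \<le> u"
      using assms(3) s(2) unfolding hahn_series_def by (metis inf_le2)
    have Xv: "X = Tcls \<alpha> v" using Tcls_same[OF a0(1)] v(1) s(1) by blast
    have "v \<in> V"
    proof (rule ccontr)
      assume nV: "v \<notin> V"
      define M where "M = (\<lambda>i. real (ordp (P i)) + \<alpha> ^ i * v) ` {i. i \<le> d \<and> P i \<noteq> 0}"
      have finM: "finite M" "M \<noteq> {}" unfolding M_def using assms(5) by auto
      define t where "t = Min M"
      have "t \<in> M" unfolding t_def using finM by simp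
      then obtain i0 where i0: "i0 \<le> d" "P i0 \<noteq> 0" "t = real (ordp (P i0)) + \<alpha> ^ i0 * v"
        unfolding M_def by blast
      define k0 where "k0 = ordp (P i0)"
      have tmin: "t \<le> real (ordp (P i)) + \<alpha> ^ i * v" if "i \<le> d" "P i \<noteq> 0" for i
        unfolding t_def using finM that by (intro Min_le) (auto simp: M_def)
      have uniq: "i = i0" if "i \<le> d" "P i \<noteq> 0" "real (ordp (P i)) + \<alpha> ^ i * v = t" for i
        using nV that i0 unfolding V_def by force
      have zero: "coeff (P i) k * F ((t - real k) / \<alpha> ^ i) = 0"
        if "i \<le> d" "\<not> (i = i0 \<and> k = k0)" for i k
      proof (rule ccontr)
        assume nz: "coeff (P i) k * F ((t - real k) / \<alpha> ^ i) \<noteq> 0"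
        define u where "u = (t - real k) / \<alpha> ^ i"
        have c: "coeff (P i) k \<noteq> 0" and Fu: "F u \<noteq> 0" using nz u_def by auto
        have Pi: "P i \<noteq> 0" using c by auto
        have ko: "ordp (P i) \<le> k" using ordp_le[OF c] .
        have "u \<in> Tcls \<alpha> v"
        proof -
          have "u = \<alpha> powi (int i0 - int i) * v + (real k0 - real k) * inverse \<alpha> ^ i"
            using i0(3) a0 unfolding u_def k0_def
            by (simp add: power_int_diff field_simps)
          moreover have "(real k0 - real k) * inverse \<alpha> ^ i \<in> Zalpha \<alpha>"
            using Zalpha.mult[OF Zalpha_int[of "int k0 - int k" \<alpha>] Zalpha_powinv[of \<alpha> i]]
            by simp
          ultimately show ?thesis unfolding Tcls_def by blast
        qed
        then have "u \<in> Tcls \<alpha> s \<inter> hsupp F" using Xv s(1) Fu by (simp add: hsupp_def)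
        then have vu: "v \<le> u" using v(2) by blast
        have tk: "t = real k + \<alpha> ^ i * u" unfolding u_def using a0 by simp
        have ai: "\<alpha> ^ i * v \<le> \<alpha> ^ i * u" using vu a0 by simp
        have tle: "t \<le> real (ordp (P i)) + \<alpha> ^ i * v" using tmin[OF that(1) Pi] .
        have eq1: "real (ordp (P i)) + \<alpha> ^ i * v = t" using tle tk ai ko by linarith
        have ii: "i = i0" using uniq[OF that(1) Pi eq1] .
        have "real k = real (ordp (P i))" using tle tk ai ko eq1 by linarith
        then have "k = k0" using ii k0_def by simp
        with ii that(2) show False by simp
      qed
      have "(\<Sum>i\<le>d. poly_subst_coeff (P i) (\<alpha> ^ i) F t) = poly_subst_coeff (P i0) (\<alpha> ^ i0) F t"
        using i0(1)
        by (subst sum.remove[of _ i0]) (auto intro!: sum.neutral simp: poly_subst_coeff_def zero)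
      also have "\<dots> = coeff (P i0) k0 * F ((t - real k0) / \<alpha> ^ i0)"
        unfolding poly_subst_coeff_def using ordp_deg[OF i0(2)] zero i0(1)
        by (subst sum.remove[of _ k0]) (auto simp: k0_def intro!: sum.neutral, metis)
      also have "(t - real k0) / \<alpha> ^ i0 = v" using i0(3) a0 unfolding k0_def by simp
      finally have "coeff (P i0) k0 * F v = 0" using assms(6) by simp
      moreover have "coeff (P i0) k0 \<noteq> 0" using ordp_nz[OF i0(2)] k0_def by simp
      moreover have "F v \<noteq> 0" using v(1) by (simp add: hsupp_def)
      ultimately show False by simp
    qed
    then show ?thesis using Xv by blast
  qed
  have "{Tcls \<alpha> s | s. Tcls \<alpha> s \<inter> hsupp F \<noteq> {}} \<subseteq> Tcls \<alpha> ` V" using key by blast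
  then show ?thesis using finV finite_subset by blast
qed

end
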